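(* Let $(M,\circ,\mathrm{OR})$ be a free $\mathbb{D}$-module of rank 3 with scalar product and orientation, and let $x,y,z\in M\setminus\epsilon M$ satisfy $x+y+z=0$. Then $$\frac{\sin\alpha_{xy}}{|z|}=\frac{\sin\alpha_{yz}}{|x|}=\frac{\sin\alpha_{zx}}{|y|}.$$
   Context: $\mathbb{D}=\{a+\epsilon b: a,b\in\mathbb{R}\}$, $\epsilon^2=0$, $\mathfrak{Re}(a+\epsilon b)=a$; real-analytic functions are extended by $f(a+\epsilon b)=f(a)+\epsilon bf'(a)$; dual numbers with nonzero real part are invertible. Scalar product: symmetric $\mathbb{D}$-bilinear $\circ:M\times M\to\mathbb{D}$ with $\mathfrak{Re}(x\circ x)\ge0$, equality iff $x\in\epsilon M$; orientation: one of the two classes of ordered bases under $\{b'_j=A_{jk}b_k\}\sim\{b_k\}$ iff $\det\mathfrak{Re}(A)>0$. For $x\notin\epsilon M$, $|x|:=\sqrt{x\circ x}$ (positive real part). For $x,y\in M\setminus\epsilon M$ the dual angle $\Theta_{xy}$ is the unique dual number in $\{0\}\cup((0,\pi)+\epsilon\mathbb{R})\cup\{\pi\}$ with $\cos\Theta_{xy}=\frac{x\circ y}{|x|\,|y|}$, and $\alpha_{xy}:=\pi-\Theta_{xy}$. *)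

theory Defs
  imports "HOL-Analysis.Analysis"
begin

datatype dual = Dual (re: real) (du: real)

instantiation dual :: comm_ring_1
begin
definition "0 = Dual 0 0"
definition "1 = Dual 1 0"
definition "x + y = Dual (re x + re y) (du x + du y)"
definition "x - y = Dual (re x - re y) (du x - du y)"
definition "- x = Dual (- re x) (- du x)"
definition "x * y = Dual (re x * re y) (re x * du y + du x * re y)"
instance
  by standard (auto simp: zero_dual_def one_dual_def plus_dual_def minus_dual_def
      uminus_dual_def times_dual_def algebra_simps intro: dual.expand)
end

definition eps :: dual where "eps = Dual 0 1"

definition dinv :: "dual \<Rightarrow> dual" where
  "dinv x = Dual (1 / re x) (- du x / (re x)\<^sup>2)"
definition ddiv :: "dual \<Rightarrow> dual \<Rightarrow> dual" where
  "ddiv x y = x * dinv y"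

text \<open>Extensions of real-analytic functions: f(a + eps b) = f a + eps b f'(a).\<close>
definition dsin :: "dual \<Rightarrow> dual" where
  "dsin x = Dual (sin (re x)) (du x * cos (re x))"
definition dcos :: "dual \<Rightarrow> dual" where
  "dcos x = Dual (cos (re x)) (- du x * sin (re x))"
definition dsqrt :: "dual \<Rightarrow> dual" where
  "dsqrt x = Dual (sqrt (re x)) (du x / (2 * sqrt (re x)))"

definition dpi :: dual where "dpi = Dual pi 0"

type_synonym dmod = "dual ^ 3"

definition in_epsM :: "dmod \<Rightarrow> bool" where
  "in_epsM x \<longleftrightarrow> (\<exists>w. x = eps *s w)"

definition scalar_product :: "(dmod \<Rightarrow> dmod \<Rightarrow> dual) \<Rightarrow> bool" where
  "scalar_product sp \<longleftrightarrow>
     (\<forall>x y. sp x y = sp y x) \<and>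
     (\<forall>x y z. sp (x + y) z = sp x z + sp y z) \<and>
     (\<forall>c x y. sp (c *s x) y = c * sp x y) \<and>
     (\<forall>x. re (sp x x) \<ge> 0) \<and>
     (\<forall>x. re (sp x x) = 0 \<longleftrightarrow> in_epsM x)"

definition is_basis :: "(3 \<Rightarrow> dmod) \<Rightarrow> bool" where
  "is_basis b \<longleftrightarrow> (\<forall>v. \<exists>!c. v = (\<Sum>k\<in>UNIV. c k *s b k))"

definition same_orientation :: "(3 \<Rightarrow> dmod) \<Rightarrow> (3 \<Rightarrow> dmod) \<Rightarrow> bool" where
  "same_orientation b b' \<longleftrightarrow>
     (\<exists>A :: 3 \<Rightarrow> 3 \<Rightarrow> dual. (\<forall>j. b' j = (\<Sum>k\<in>UNIV. A j k *s b k)) \<and>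
        det (\<chi> j k. re (A j k)) > 0)"

definition orientation :: "(3 \<Rightarrow> dmod) set \<Rightarrow> bool" where
  "orientation OR \<longleftrightarrow>
     (\<exists>b. is_basis b \<and> OR = {b'. is_basis b' \<and> same_orientation b b'})"

definition dnorm :: "(dmod \<Rightarrow> dmod \<Rightarrow> dual) \<Rightarrow> dmod \<Rightarrow> dual" where
  "dnorm sp x = dsqrt (sp x x)"

definition dual_angle :: "(dmod \<Rightarrow> dmod \<Rightarrow> dual) \<Rightarrow> dmod \<Rightarrow> dmod \<Rightarrow> dual" where
  "dual_angle sp x y =
     (THE t. (t = 0 \<or> (0 < re t \<and> re t < pi) \<or> t = dpi) \<and>
             dcos t = ddiv (sp x y) (dnorm sp x * dnorm sp y))"

definition alpha :: "(dmod \<Rightarrow> dmod \<Rightarrow> dual) \<Rightarrow> dmod \<Rightarrow> dmod \<Rightarrow> dual" where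
  "alpha sp x y = dpi - dual_angle sp x y"

end

theory Submission
  imports Defs
begin


lemma dual_eq_iff: "x = y \<longleftrightarrow> re x = re y \<and> du x = du y"
  by (cases x; cases y) auto

lemma dual_ops[simp]:
  "re 0 = 0" "du 0 = 0" "re 1 = 1" "du 1 = 0"
  "re (x + y) = re x + re y" "du (x + y) = du x + du y"
  "re (x - y) = re x - re y" "du (x - y) = du x - du y"
  "re (- x) = - re x" "du (- x) = - du x"
  "re (x * y) = re x * re y" "du (x * y) = re x * du y + du x * re y"
  "re eps = 0" "du eps = 1"
  by (simp_all add: zero_dual_def one_dual_def plus_dual_def minus_dual_def
      uminus_dual_def times_dual_def eps_def)

lemma dual_sq: "re (x^2) = (re x)^2" "du (x^2) = 2 * re x * du x"
  by (simp_all add: power2_eq_square)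

lemma dinv_mult: "re x \<noteq> 0 \<Longrightarrow> x * dinv x = 1"
  by (simp add: dual_eq_iff dinv_def power2_eq_square field_simps)

lemma dinv_re[simp]: "re (dinv x) = 1 / re x"
  by (simp add: dinv_def)

lemma dinv_prod: "re x \<noteq> 0 \<Longrightarrow> re y \<noteq> 0 \<Longrightarrow> dinv x * dinv y = dinv (x * y)"
  by (simp add: dual_eq_iff dinv_def power2_eq_square field_simps)

lemma dsqrt_sq: "re x > 0 \<Longrightarrow> dsqrt x * dsqrt x = x"
  by (simp add: dual_eq_iff dsqrt_def)

lemma dsqrt_re[simp]: "re (dsqrt x) = sqrt (re x)"
  by (simp add: dsqrt_def)

lemma dsin_dcos: "(dsin t)^2 + (dcos t)^2 = 1"
  by (simp add: dual_eq_iff dsin_def dcos_def dual_sq algebra_simps)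

lemma dsin_alpha: "dsin (dpi - t) = dsin t"
  by (simp add: dual_eq_iff dsin_def dpi_def)

lemma eps_sq: "eps * eps = 0"
  by (simp add: dual_eq_iff)

lemma eps_sq2[simp]: "eps * a * eps = 0" "eps * (eps * a) = 0" "eps * a * eps * b = 0"
  by (simp_all add: dual_eq_iff)

lemma re_of_nat[simp]: "re (of_nat n) = of_nat n" "du (of_nat n) = 0"
  by (induction n) simp_all

lemma re_numeral[simp]: "re (numeral n) = numeral n" "du (numeral n) = 0"
  by (metis of_nat_numeral re_of_nat)+

lemma sq_eq_pos:
  fixes a b :: dual
  assumes "a^2 = b^2" "re a > 0" "re b > 0" shows "a = b"
proof -
  have "(a - b) * (a + b) = 0" using assms(1) by (simp add: algebra_simps power2_eq_square)
  then have "re ((a - b) * (a + b)) = 0" "du ((a - b) * (a + b)) = 0" by simp_all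
  then show ?thesis using assms(2,3) by (simp add: dual_eq_iff)
qed

lemma sq_one: "c^2 = 1 \<Longrightarrow> re c = 1 \<Longrightarrow> c = 1" "c^2 = 1 \<Longrightarrow> re c = -1 \<Longrightarrow> c = -1"
  by (auto simp: dual_eq_iff dual_sq dest!: arg_cong[where f=du])



lemma angle_ex1:
  fixes c :: dual
  assumes "-1 \<le> re c" "re c \<le> 1" "re c = 1 \<Longrightarrow> c = 1" "re c = -1 \<Longrightarrow> c = -1"
  shows "\<exists>!t. (t = 0 \<or> (0 < re t \<and> re t < pi) \<or> t = dpi) \<and> dcos t = c"
proof (rule ex_ex1I)
  show "\<exists>t. (t = 0 \<or> (0 < re t \<and> re t < pi) \<or> t = dpi) \<and> dcos t = c"
  proof (cases "re c = 1 \<or> re c = -1")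
    case True
    then show ?thesis
    proof
      assume "re c = 1" then have "c = 1" using assms by simp
      then show ?thesis by (intro exI[of _ 0]) (simp add: dual_eq_iff dcos_def)
    next
      assume "re c = -1" then have "c = -1" using assms by simp
      then show ?thesis by (intro exI[of _ dpi]) (simp add: dual_eq_iff dcos_def dpi_def)
    qed
  next
    case False
    then have h: "-1 < re c" "re c < 1" using assms(1,2) by auto
    define a where "a = arccos (re c)"
    have s: "sin a \<noteq> 0" using sin_arccos_nonzero[OF h] a_def by simp
    have a: "0 < a" "a < pi" using arccos_lt_bounded[OF h] a_def by auto
    show ?thesis
      apply (intro exI[of _ "Dual a (- du c / sin a)"])
      using a s h by (simp add: dual_eq_iff dcos_def a_def)
  qed
next
  fix t1 t2
  assume A: "(t1 = 0 \<or> (0 < re t1 \<and> re t1 < pi) \<or> t1 = dpi) \<and> dcos t1 = c"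
     and B: "(t2 = 0 \<or> (0 < re t2 \<and> re t2 < pi) \<or> t2 = dpi) \<and> dcos t2 = c"
  have r1: "0 \<le> re t1" "re t1 \<le> pi" using A by (auto simp: dpi_def)
  have r2: "0 \<le> re t2" "re t2 \<le> pi" using B by (auto simp: dpi_def)
  have "cos (re t1) = cos (re t2)" using A B by (auto simp: dcos_def)
  then have eq: "re t1 = re t2" using cos_inj_pi r1 r2 by blast
  show "t1 = t2"
  proof (cases "0 < re t1 \<and> re t1 < pi")
    case True
    then have "sin (re t1) > 0" by (simp add: sin_gt_zero)
    moreover have "du t1 * sin (re t1) = du t2 * sin (re t2)"
      using A B by (auto simp: dcos_def)
    ultimately show ?thesis using eq by (simp add: dual_eq_iff)
  next
    case False
    then show ?thesis using A B eq by (auto simp: dpi_def)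
  qed
qed

lemma angle_prop:
  fixes c :: dual
  assumes "-1 \<le> re c" "re c \<le> 1" "re c = 1 \<Longrightarrow> c = 1" "re c = -1 \<Longrightarrow> c = -1"
  defines "t \<equiv> THE t. (t = 0 \<or> (0 < re t \<and> re t < pi) \<or> t = dpi) \<and> dcos t = c"
  shows "dcos t = c" "re (dsin t) \<ge> 0" "re (dsin t) = 0 \<Longrightarrow> dsin t = 0"
proof -
  have P: "(t = 0 \<or> (0 < re t \<and> re t < pi) \<or> t = dpi) \<and> dcos t = c"
    unfolding t_def by (rule theI'[OF angle_ex1[OF assms(1-4)]])
  then show "dcos t = c" by simp
  show "re (dsin t) \<ge> 0" using P
    by (auto simp: dsin_def dpi_def intro: sin_ge_zero)
  show "re (dsin t) = 0 \<Longrightarrow> dsin t = 0" using P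
    by (auto simp: dsin_def dpi_def dual_eq_iff dest: sin_gt_zero)
qed



definition G :: "(dmod \<Rightarrow> dmod \<Rightarrow> dual) \<Rightarrow> dmod \<Rightarrow> dmod \<Rightarrow> dual"
  where "G sp x y = sp x x * sp y y - (sp x y)^2"

context fixes sp :: "dmod \<Rightarrow> dmod \<Rightarrow> dual" assumes SP: "scalar_product sp"
begin

lemma sp_sym: "sp x y = sp y x" using SP unfolding scalar_product_def by blast
lemma sp_addl: "sp (x + y) z = sp x z + sp y z" using SP unfolding scalar_product_def by blast
lemma sp_scl: "sp (c *s x) y = c * sp x y" using SP unfolding scalar_product_def by blast
lemma sp_addr: "sp z (x + y) = sp z x + sp z y" by (metis sp_sym sp_addl)
lemma sp_scr: "sp y (c *s x) = c * sp y x" by (metis sp_sym sp_scl)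
lemma sp_negl: "sp (- x) y = - sp x y"
  by (metis vector_sneg_minus1 sp_scl mult_minus1)
lemma sp_negr: "sp y (- x) = - sp y x" by (metis sp_sym sp_negl)
lemma sp_diffl: "sp (x - y) z = sp x z - sp y z"
  by (metis diff_conv_add_uminus sp_addl sp_negl)
lemma sp_diffr: "sp z (x - y) = sp z x - sp z y"
  by (metis sp_sym sp_diffl)
lemma P_nonneg: "re (sp x x) \<ge> 0" using SP unfolding scalar_product_def by blast
lemma P_zero: "re (sp x x) = 0 \<longleftrightarrow> in_epsM x" using SP unfolding scalar_product_def by blast

lemma P_pos: "\<not> in_epsM x \<Longrightarrow> re (sp x x) > 0"
  using P_nonneg[of x] P_zero[of x] by linarith


lemma CS_aux:
  assumes "re (sp y y) > 0"
  shows "re (sp (x - Dual (re (sp x y) / re (sp y y)) 0 *s y) (x - Dual (re (sp x y) / re (sp y y)) 0 *s y)) = re (sp x x) - (re (sp x y))^2 / re (sp y y)"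
proof -
  define r where "r = re (sp x y) / re (sp y y)"
  have "sp (x - Dual r 0 *s y) (x - Dual r 0 *s y) = sp x x - Dual r 0 * sp x y - Dual r 0 * sp x y + Dual r 0 * Dual r 0 * sp y y"
    by (simp add: sp_diffl sp_diffr sp_scl sp_scr sp_sym[of y x] algebra_simps)
  then have "re (sp (x - Dual r 0 *s y) (x - Dual r 0 *s y)) = re (sp x x) - 2 * r * re (sp x y) + r * r * re (sp y y)"
    by simp
  also have "\<dots> = re (sp x x) - (re (sp x y))^2 / re (sp y y)"
    using assms(1) by (simp add: r_def power2_eq_square field_simps)
  finally show ?thesis by (simp add: r_def)
qed

lemma CS: "(re (sp x y))^2 \<le> re (sp x x) * re (sp y y)"
proof (cases "re (sp y y) > 0")
  case True
  have "0 \<le> re (sp x x) - (re (sp x y))^2 / re (sp y y)"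
    using CS_aux[OF True, of x] P_nonneg by metis
  then show ?thesis using True by (simp add: field_simps)
next
  case False
  then have "in_epsM y" using P_nonneg[of y] P_zero[of y] by linarith
  then obtain w where w: "y = eps *s w" by (auto simp: in_epsM_def)
  have "re (sp x y) = 0" using w by (simp add: sp_scr)
  then show ?thesis using P_nonneg[of x] P_nonneg[of y] by simp
qed

lemma G_shift: "G sp (c *s y + w) y = G sp w y"
  by (simp add: G_def sp_addl sp_addr sp_scl sp_scr sp_sym[of y w] power2_eq_square algebra_simps)

lemma CS_eq:
  assumes "re (sp y y) > 0" "(re (sp x y))^2 = re (sp x x) * re (sp y y)"
  shows "G sp x y = 0"
proof -
  define r where "r = re (sp x y) / re (sp y y)"
  have "re (sp (x - Dual r 0 *s y) (x - Dual r 0 *s y)) = 0"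
    using CS_aux[OF assms(1), of x] assms by (simp add: r_def field_simps power2_eq_square)
  then obtain v where v: "x - Dual r 0 *s y = eps *s v" using P_zero by (auto simp: in_epsM_def)
  then have "x = Dual r 0 *s y + eps *s v" by (simp add: algebra_simps)
  then have "G sp x y = G sp (eps *s v) y" using G_shift by simp
  also have "\<dots> = 0"
    by (simp add: G_def sp_scl sp_scr power2_eq_square eps_sq mult.assoc[symmetric])
  finally show ?thesis .
qed

end


lemma sq_eq_nonneg:
  fixes a b :: dual
  assumes "a^2 = b^2" "re a \<ge> 0" "re b \<ge> 0" "re a = 0 \<Longrightarrow> a = 0" "re b = 0 \<Longrightarrow> b = 0"
  shows "a = b"
proof (cases "re a > 0 \<and> re b > 0")
  case True then show ?thesis using sq_eq_pos assms(1) by blast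
next
  case False
  then have "re a = 0 \<or> re b = 0" using assms(2,3) by linarith
  then show ?thesis
  proof
    assume "re a = 0" then have "a = 0" using assms(4) by simp
    then have "re (b^2) = 0" using assms(1) by simp
    then have "re b = 0" by (simp add: dual_sq)
    then show ?thesis using assms(5) \<open>a = 0\<close> by simp
  next
    assume "re b = 0" then have "b = 0" using assms(5) by simp
    then have "re (a^2) = 0" using assms(1) by simp
    then have "re a = 0" by (simp add: dual_sq)
    then show ?thesis using assms(4) \<open>b = 0\<close> by simp
  qed
qed

context fixes sp :: "dmod \<Rightarrow> dmod \<Rightarrow> dual" assumes SP: "scalar_product sp"
begin

lemma cos_facts:
  assumes x: "\<not> in_epsM x" and y: "\<not> in_epsM y"
  defines "c \<equiv> ddiv (sp x y) (dnorm sp x * dnorm sp y)"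
  shows "-1 \<le> re c" "re c \<le> 1" "1 - c^2 = G sp x y * dinv (sp x x * sp y y)"
    "re c = 1 \<Longrightarrow> c = 1" "re c = -1 \<Longrightarrow> c = -1"
proof -
  have px: "re (sp x x) > 0" using P_pos[OF SP x] .
  have py: "re (sp y y) > 0" using P_pos[OF SP y] .
  have rc: "re c = re (sp x y) / (sqrt (re (sp x x)) * sqrt (re (sp y y)))"
    by (simp add: c_def ddiv_def dnorm_def)
  have "\<bar>re (sp x y)\<bar> = sqrt ((re (sp x y))^2)" by simp
  also have "\<dots> \<le> sqrt (re (sp x x) * re (sp y y))"
    using CS[OF SP] real_sqrt_le_mono by blast
  finally have ab: "\<bar>re (sp x y)\<bar> \<le> sqrt (re (sp x x)) * sqrt (re (sp y y))"
    by (simp add: real_sqrt_mult)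
  have pos: "sqrt (re (sp x x)) * sqrt (re (sp y y)) > 0" using px py by simp
  show "-1 \<le> re c" "re c \<le> 1" using ab pos px py unfolding rc
    by (auto simp: field_simps abs_le_iff)
  have nn: "dnorm sp x * dnorm sp y * (dnorm sp x * dnorm sp y) = sp x x * sp y y"
    using dsqrt_sq[OF px] dsqrt_sq[OF py] by (simp add: dnorm_def algebra_simps)
  have r1: "re (dnorm sp x * dnorm sp y) \<noteq> 0" using pos px py by (simp add: dnorm_def)
  have r2: "re (sp x x * sp y y) \<noteq> 0" using px py by simp
  have A: "c^2 = (sp x y)^2 * dinv (sp x x * sp y y)"
    unfolding c_def ddiv_def power2_eq_square
    using dinv_prod[OF r1 r1] nn by (simp add: algebra_simps)
  show eq: "1 - c^2 = G sp x y * dinv (sp x x * sp y y)"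
    by (simp only: G_def left_diff_distrib A dinv_mult[OF r2])
  {
    assume "re c = 1 \<or> re c = -1"
    then have "(re c)^2 = 1" by auto
    then have "(re (sp x y))^2 = (sqrt (re (sp x x)) * sqrt (re (sp y y)))^2"
      unfolding rc using pos by (simp add: field_simps power2_eq_square)
    then have "(re (sp x y))^2 = re (sp x x) * re (sp y y)"
      using px py by (simp add: power_mult_distrib)
    then have "G sp x y = 0" using CS_eq[OF SP py] by blast
    then have "c^2 = 1" using eq by simp
  }
  then show "re c = 1 \<Longrightarrow> c = 1" "re c = -1 \<Longrightarrow> c = -1" using sq_one by auto
qed

lemma sin_facts:
  assumes x: "\<not> in_epsM x" and y: "\<not> in_epsM y"
  defines "s \<equiv> dsin (alpha sp x y)"
  shows "s^2 = G sp x y * dinv (sp x x * sp y y)" "re s \<ge> 0" "re s = 0 \<Longrightarrow> s = 0"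
proof -
  note cf = cos_facts[OF x y]
  have s: "s = dsin (dual_angle sp x y)" by (simp add: s_def alpha_def dsin_alpha)
  note ap = angle_prop[OF cf(1,2,4,5), folded dual_angle_def]
  show "re s \<ge> 0" "re s = 0 \<Longrightarrow> s = 0" using ap s by auto
  have "s^2 = 1 - (dcos (dual_angle sp x y))^2" using dsin_dcos s by (metis add_diff_cancel_right')
  then show "s^2 = G sp x y * dinv (sp x x * sp y y)" using ap(1) cf(3) by simp
qed

lemma S_facts:
  assumes x: "\<not> in_epsM x" and y: "\<not> in_epsM y" and z: "\<not> in_epsM z"
  defines "S \<equiv> ddiv (dsin (alpha sp x y)) (dnorm sp z)"
  shows "S^2 = G sp x y * dinv (sp x x * sp y y * sp z z)" "re S \<ge> 0" "re S = 0 \<Longrightarrow> S = 0"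
proof -
  note sf = sin_facts[OF x y]
  have pz: "re (sp z z) > 0" using P_pos[OF SP z] .
  have px: "re (sp x x) > 0" using P_pos[OF SP x] .
  have py: "re (sp y y) > 0" using P_pos[OF SP y] .
  have rS: "re S = re (dsin (alpha sp x y)) / sqrt (re (sp z z))"
    by (simp add: S_def ddiv_def dnorm_def)
  show "re S \<ge> 0" using rS sf(2) pz by simp
  show "re S = 0 \<Longrightarrow> S = 0" using rS sf(3) pz by (simp add: S_def ddiv_def dnorm_def)
  have rn: "re (dnorm sp z) \<noteq> 0" using pz by (simp add: dnorm_def)
  have "S^2 = (dsin (alpha sp x y))^2 * dinv (dnorm sp z * dnorm sp z)"
    unfolding S_def ddiv_def power2_eq_square using dinv_prod[OF rn rn, symmetric] by (simp add: algebra_simps)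
  also have "dnorm sp z * dnorm sp z = sp z z" using dsqrt_sq[OF pz] by (simp add: dnorm_def)
  also have "(dsin (alpha sp x y))^2 * dinv (sp z z) = G sp x y * (dinv (sp x x * sp y y) * dinv (sp z z))"
    using sf(1) by (simp add: algebra_simps)
  also have "dinv (sp x x * sp y y) * dinv (sp z z) = dinv (sp x x * sp y y * sp z z)"
    using px py pz by (intro dinv_prod) auto
  finally show "S^2 = G sp x y * dinv (sp x x * sp y y * sp z z)" .
qed

lemma G_tri:
  assumes "x + y + z = 0"
  shows "G sp x y = G sp y z" "G sp y z = G sp z x"
proof -
  have z: "z = - (x + y)" using minus_unique[OF assms] by simp
  have yx: "sp y x = sp x y" by (rule sp_sym[OF SP])
  have e1: "sp y z = - sp x y - sp y y" unfolding z
    by (simp add: sp_negr[OF SP] sp_addr[OF SP] sp_diffr[OF SP] yx)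
  have e2: "sp z x = - sp x x - sp x y" unfolding z
    by (simp add: sp_negl[OF SP] sp_addl[OF SP] sp_diffl[OF SP] yx)
  have e3: "sp z z = sp x x + 2 * sp x y + sp y y" unfolding z
    by (simp add: sp_negl[OF SP] sp_negr[OF SP] sp_addl[OF SP] sp_addr[OF SP] sp_diffl[OF SP] sp_diffr[OF SP] yx)
  have e4: "sp x z = sp z x" by (rule sp_sym[OF SP])
  show "G sp x y = G sp y z" unfolding G_def e1 e3
    by (simp add: power2_eq_square algebra_simps)
  show "G sp y z = G sp z x" unfolding G_def e1 e2 e3
    by (simp add: power2_eq_square algebra_simps)
qed

end

theorem theorem19:
  fixes sp :: "dmod \<Rightarrow> dmod \<Rightarrow> dual" and OR :: "(3 \<Rightarrow> dmod) set"
    and x y z :: dmod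
  assumes "scalar_product sp" and "orientation OR"
    and "\<not> in_epsM x" and "\<not> in_epsM y" and "\<not> in_epsM z"
    and "x + y + z = 0"
  shows "ddiv (dsin (alpha sp x y)) (dnorm sp z) = ddiv (dsin (alpha sp y z)) (dnorm sp x)
       \<and> ddiv (dsin (alpha sp y z)) (dnorm sp x) = ddiv (dsin (alpha sp z x)) (dnorm sp y)"
proof -
  note S1 = S_facts[OF assms(1) assms(3,4,5)]
  note S2 = S_facts[OF assms(1) assms(4,5,3)]
  note S3 = S_facts[OF assms(1) assms(5,3,4)]
  have y2: "y + z + x = 0" using assms(6) by (simp add: algebra_simps)
  note g = G_tri[OF assms(1) assms(6)]
  have d1: "sp y y * sp z z * sp x x = sp x x * sp y y * sp z z" by (simp add: ac_simps)
  have d2: "sp z z * sp x x * sp y y = sp x x * sp y y * sp z z" by (simp add: ac_simps)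
  have e1: "(ddiv (dsin (alpha sp x y)) (dnorm sp z))^2 = (ddiv (dsin (alpha sp y z)) (dnorm sp x))^2"
    using S1(1) S2(1) g d1 by simp
  have e2: "(ddiv (dsin (alpha sp y z)) (dnorm sp x))^2 = (ddiv (dsin (alpha sp z x)) (dnorm sp y))^2"
    using S2(1) S3(1) g d1 d2 by simp
  show ?thesis
    using sq_eq_nonneg[OF e1 S1(2) S2(2) S1(3) S2(3)] sq_eq_nonneg[OF e2 S2(2) S3(2) S2(3) S3(3)]
    by simp
qed

end
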